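(* Let $k\ge2$ and $n\ge1$. For every permutation $P$ of $\{1,\dots,k^n\}$, there is a strategy for labeled chip-firing starting with $k^{2n}$ chips labeled $1,\dots,k^{2n}$ at the root of the infinite rooted directed $k$-ary tree whose stable configuration (a permutation of $\{1,\dots,k^{2n}\}$) contains a subsequence of length $k^n$ that is order-isomorphic to $P$.
   Context: Labeled chip-firing on the infinite rooted directed $k$-ary tree (each vertex has $k$ children ordered left to right, root on layer $1$): a vertex with at least $k$ chips may fire by choosing any $k$ of its chips and sending the $i$-th smallest label among them to its $i$-th leftmost child. A strategy is a sequence of legal firings continued until no vertex has $\ge k$ chips. Starting with $k^p$ chips at the root, every stable configuration has exactly one chip on each vertex of layer $p+1$ and none elsewhere, and is identified with the permutation of labels read left to right on layer $p+1$. A sequence $w_1,\dots,w_n$ of distinct numbers is order-isomorphic to a permutation $\sigma\in S_n$ if, for each $j$, $w_j$ is the $\sigma_j$-th smallest of $w_1,\dots,w_n$. *)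

theory Defs
  imports Main
begin

text \<open>Vertices of the infinite rooted k-ary tree are lists of child indices
  (each in 0..k-1); the root is the empty list, layer of v is length v + 1,
  and the i-th leftmost child (0-indexed) of v is v @ [i].\<close>

type_synonym config = "nat list \<Rightarrow> nat set"

definition fire :: "nat \<Rightarrow> config \<Rightarrow> nat list \<Rightarrow> nat set \<Rightarrow> config" where
  "fire k C v S = (\<lambda>u.
     if u = v then C v - S
     else if (\<exists>i<k. u = v @ [i])
          then C u \<union> {sorted_list_of_set S ! (last u)}
          else C u)"

definition fire_step :: "nat \<Rightarrow> config \<Rightarrow> config \<Rightarrow> bool" where
  "fire_step k C C' \<longleftrightarrow>
     (\<exists>v S. S \<subseteq> C v \<and> finite S \<and> card S = k \<and> C' = fire k C v S)"

definition stable :: "nat \<Rightarrow> config \<Rightarrow> bool" where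
  "stable k C \<longleftrightarrow> (\<forall>v. finite (C v) \<and> card (C v) < k)"

definition init_config :: "nat \<Rightarrow> config" where
  "init_config N = (\<lambda>u. if u = [] then {1..N} else {})"

text \<open>A strategy is a finite sequence of legal firings ending in a stable
  configuration; its result is a stable configuration reachable by firings.\<close>
definition strategy_result :: "nat \<Rightarrow> nat \<Rightarrow> config \<Rightarrow> bool" where
  "strategy_result k N C \<longleftrightarrow> (fire_step k)\<^sup>*\<^sup>* (init_config N) C \<and> stable k C"

text \<open>The j-th vertex (0-indexed, left to right) of the layer consisting of
  vertices of depth m: base-k digits of j, most significant first.\<close>
definition layer_vertex :: "nat \<Rightarrow> nat \<Rightarrow> nat \<Rightarrow> nat list" where
  "layer_vertex k m j = map (\<lambda>i. j div k ^ (m - 1 - i) mod k) [0..<m]"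

text \<open>Reading the labels left to right on layer p+1 (depth p); each such vertex
  holds exactly one chip in a stable configuration.\<close>
definition read_layer :: "nat \<Rightarrow> nat \<Rightarrow> config \<Rightarrow> nat list" where
  "read_layer k p C = map (\<lambda>j. THE x. C (layer_vertex k p j) = {x}) [0..<k ^ p]"

text \<open>Order-isomorphism: w_j is the sigma_j-th smallest of w (sigma 1-indexed).\<close>
definition order_iso :: "nat list \<Rightarrow> nat list \<Rightarrow> bool" where
  "order_iso w \<sigma> \<longleftrightarrow> distinct w \<and> length w = length \<sigma> \<and>
     (\<forall>j<length w. \<sigma> ! j = card {i. i < length w \<and> w ! i \<le> w ! j})"

definition contains_pattern :: "nat list \<Rightarrow> nat list \<Rightarrow> bool" where
  "contains_pattern w \<sigma> \<longleftrightarrow>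
     (\<exists>idx. strict_mono_on {..<length \<sigma>} idx \<and> (\<forall>i<length \<sigma>. idx i < length w) \<and>
            order_iso (map (\<lambda>i. w ! idx i) [0..<length \<sigma>]) \<sigma>)"

definition is_perm_list :: "nat \<Rightarrow> nat list \<Rightarrow> bool" where
  "is_perm_list m P \<longleftrightarrow> distinct P \<and> set P = {1..m}"

end

theory Submission
  imports Defs
begin

fun ri :: "nat \<Rightarrow> nat list \<Rightarrow> nat" where
  "ri k [] = 0" | "ri k (d # w) = d + k * ri k w"

definition rv :: "nat \<Rightarrow> nat \<Rightarrow> nat \<Rightarrow> nat" where
  "rv k m j = ri k (layer_vertex k m j)"

lemma lv_Suc: "layer_vertex k (Suc m) j = layer_vertex k m (j div k) @ [j mod k]"
proof -
  have "map (\<lambda>i. j div k ^ (Suc m - 1 - i) mod k) [0..<m] =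
        map (\<lambda>i. j div k div k ^ (m - 1 - i) mod k) [0..<m]"
  proof (rule map_cong[OF refl])
    fix i assume "i \<in> set [0..<m]"
    hence "Suc m - 1 - i = Suc (m - 1 - i)" by auto
    thus "j div k ^ (Suc m - 1 - i) mod k = j div k div k ^ (m - 1 - i) mod k"
      by (simp add: div_mult2_eq)
  qed
  thus ?thesis by (simp add: layer_vertex_def)
qed

lemma ri_snoc: "ri k (xs @ [d]) = ri k xs + k ^ length xs * d"
  by (induction xs) (auto simp: algebra_simps)

lemma lv_len[simp]: "length (layer_vertex k m j) = m"
  by (simp add: layer_vertex_def)

lemma lv_dig: "k > 0 \<Longrightarrow> \<forall>x\<in>set (layer_vertex k m j). x < k"
  by (auto simp: layer_vertex_def)

lemma rv_Suc: "rv k (Suc m) j = rv k m (j div k) + k ^ m * (j mod k)"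
  by (simp add: rv_def lv_Suc ri_snoc)

lemma rv_0[simp]: "rv k 0 j = 0"
  by (simp add: rv_def layer_vertex_def)

lemma rv_add:
  assumes "k > 0" "b < k ^ m2"
  shows "rv k (m1 + m2) (a * k ^ m2 + b) = rv k m1 a + k ^ m1 * rv k m2 b"
  using assms(2)
proof (induction m2 arbitrary: b)
  case 0 thus ?case by simp
next
  case (Suc m2)
  have d: "(a * k ^ Suc m2 + b) div k = a * k ^ m2 + b div k"
  proof -
    have "a * k ^ Suc m2 + b = b + k * (a * k ^ m2)" by (simp add: algebra_simps)
    moreover have "(b + k * (a * k ^ m2)) div k = a * k ^ m2 + b div k" using assms(1) by simp
    ultimately show ?thesis by metis
  qed
  have m: "(a * k ^ Suc m2 + b) mod k = b mod k"
    by (metis mod_mult_self2 add.commute mult.commute mult.left_commute power_Suc)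
  have bk: "b div k < k ^ m2" using Suc.prems assms(1)
    by (simp add: div_less_iff_less_mult mult.commute)
  have "rv k (m1 + Suc m2) (a * k ^ Suc m2 + b) =
        rv k (m1 + m2) (a * k ^ m2 + b div k) + k ^ (m1 + m2) * (b mod k)"
    using rv_Suc[of k "m1+m2" "a * k ^ Suc m2 + b"] d m by simp
  also have "\<dots> = rv k m1 a + k ^ m1 * (rv k m2 (b div k) + k ^ m2 * (b mod k))"
    using Suc.IH[OF bk] by (simp add: algebra_simps power_add)
  also have "\<dots> = rv k m1 a + k ^ m1 * rv k (Suc m2) b" by (simp add: rv_Suc)
  finally show ?case .
qed

lemma ri_bound: "k > 0 \<Longrightarrow> \<forall>x\<in>set xs. x < k \<Longrightarrow> ri k xs < k ^ length xs"
proof (induction xs)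
  case Nil thus ?case by simp
next
  case (Cons d w)
  hence "ri k w + 1 \<le> k ^ length w" "d < k" by auto
  hence "k * ri k w + k \<le> k * k ^ length w" "d < k"
    by (metis add.commute mult_le_mono2 mult_Suc_right plus_1_eq_Suc) (rule \<open>d < k\<close>)
  thus ?case by simp
qed

lemma rv_bound: "k > 0 \<Longrightarrow> rv k m j < k ^ m"
  using ri_bound[of k "layer_vertex k m j"] lv_dig[of k m j] by (simp add: rv_def)

lemma rv_surj: "k > 0 \<Longrightarrow> t < k ^ m \<Longrightarrow> \<exists>b < k ^ m. rv k m b = t"
proof (induction m arbitrary: t)
  case 0 thus ?case by simp
next
  case (Suc m)
  define a where "a = t div k ^ m"
  define r where "r = t mod k ^ m"
  have ak: "a < k" using Suc.prems by (simp add: a_def div_less_iff_less_mult mult.commute)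
  have "r < k ^ m" using Suc.prems by (simp add: r_def)
  then obtain b where b: "b < k ^ m" "rv k m b = r" using Suc.IH Suc.prems by blast
  have "b * k + a < k ^ Suc m"
  proof -
    have "b * k + a < (b + 1) * k" using ak by simp
    also have "\<dots> \<le> k ^ m * k" using b(1) by (intro mult_le_mono1) simp
    finally show ?thesis by (simp add: mult.commute)
  qed
  moreover have "rv k (Suc m) (b * k + a) = t"
    using ak b(2) Suc.prems(1) by (simp add: rv_Suc a_def r_def mult.commute)
  ultimately show ?case by blast
qed

lemma sorted_img:
  assumes "strict_mono g"
  shows "sorted_list_of_set (g ` {a..<b}) = map g [a..<b]"
proof -
  have "sorted (map g [a..<b])"
    using assms by (auto simp: sorted_iff_nth_mono strict_mono_less_eq)
  moreover have "distinct (map g [a..<b])"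
    using strict_mono_imp_inj_on[OF assms] by (simp add: distinct_map inj_on_subset)
  moreover have "set (map g [a..<b]) = g ` {a..<b}" by simp
  moreover have "finite (g ` {a..<b})" by simp
  ultimately have "sorted_wrt (<) (map g [a..<b])"
     "length (map g [a..<b]) = card (g ` {a..<b})"
     "set (map g [a..<b]) = g ` {a..<b}" "finite (g ` {a..<b})"
    by (metis strict_sorted_iff, metis distinct_card, simp, simp)
  thus ?thesis
    using sorted_list_of_set_unique[of "g ` {a..<b}" "map g [a..<b]"] by blast
qed

definition L :: "nat \<Rightarrow> (nat \<Rightarrow> nat) \<Rightarrow> nat list \<Rightarrow> config \<Rightarrow> nat \<Rightarrow> nat \<Rightarrow> config" where
  "L k g v C M j = (\<lambda>u. if u = v then g ` {k*j..<k*M}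
      else if (\<exists>i<k. u = v @ [i]) then (\<lambda>t. g (t*k + last u)) ` {..<j} else C u)"

lemma loop:
  assumes g: "strict_mono g" and k: "k > 0" and Cv: "C v = g ` {..<k*M}"
    and Cw: "\<forall>w. w \<noteq> [] \<longrightarrow> C (v @ w) = {}"
  shows "j \<le> M \<Longrightarrow> (fire_step k)\<^sup>*\<^sup>* C (L k g v C M j)"
proof (induction j)
  case 0
  have "L k g v C M 0 = C"
  proof
    fix u show "L k g v C M 0 u = C u"
    proof (cases "\<exists>i<k. u = v @ [i]")
      case True
      then obtain i where "u = v @ [i]" by blast
      thus ?thesis using Cw[rule_format, of "[i]"] by (simp add: L_def)
    next
      case False thus ?thesis using Cv by (auto simp: L_def lessThan_atLeast0)
    qed
  qed
  thus ?case by simp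
next
  case (Suc j)
  hence IH: "(fire_step k)\<^sup>*\<^sup>* C (L k g v C M j)" and jM: "j < M" by auto
  have inj: "inj g" using g by (rule strict_mono_imp_inj_on)
  let ?S = "g ` {k*j..<k*j+k}"
  have fs: "fire_step k (L k g v C M j) (L k g v C M (Suc j))"
    unfolding fire_step_def
  proof (intro exI conjI)
    have "k*j+k \<le> k*M" using jM
      by (metis Suc_leI mult_Suc_right add.commute mult_le_mono2)
    thus "?S \<subseteq> L k g v C M j v" by (auto simp: L_def)
    show "finite ?S" by simp
    show "card ?S = k" using inj by (simp add: card_image inj_on_subset)
    show "L k g v C M (Suc j) = fire k (L k g v C M j) v ?S"
    proof
      fix u
      show "L k g v C M (Suc j) u = fire k (L k g v C M j) v ?S u"
      proof (cases "u = v")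
        case True
        have "{k*j..<k*M} - {k*j..<k*j+k} = {k * Suc j..<k*M}" by auto
        hence "g ` {k*j..<k*M} - ?S = g ` {k * Suc j..<k*M}"
          by (metis image_set_diff[OF inj])
        thus ?thesis using True by (simp add: L_def fire_def)
      next
        case False
        show ?thesis
        proof (cases "\<exists>i<k. u = v @ [i]")
          case True
          then obtain i where i: "i < k" "u = v @ [i]" by blast
          have "sorted_list_of_set ?S ! i = g (j*k + i)"
            using i(1) by (simp add: sorted_img[OF g] mult.commute)
          moreover have "(\<lambda>t. g (t*k + i)) ` {..<Suc j} =
              (\<lambda>t. g (t*k + i)) ` {..<j} \<union> {g (j*k+i)}"
            by (auto simp: lessThan_Suc)
          ultimately show ?thesis using i False by (simp add: L_def fire_def)
        next
          case False2: False
          thus ?thesis using False by (auto simp: L_def fire_def)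
        qed
      qed
    qed
  qed
  show ?case using IH fs by simp
qed

definition fin :: "nat \<Rightarrow> nat \<Rightarrow> (nat \<Rightarrow> nat) \<Rightarrow> nat list \<Rightarrow> nat list \<Rightarrow> nat set" where
  "fin k h g v u = (if length u = length v + h \<and> (\<forall>x\<in>set (drop (length v) u). x < k)
      then {g (ri k (drop (length v) u))} else {})"

definition tgt :: "nat \<Rightarrow> nat \<Rightarrow> (nat \<Rightarrow> nat) \<Rightarrow> nat list \<Rightarrow> config \<Rightarrow> config" where
  "tgt k h g v C = (\<lambda>u. if (\<exists>w. u = v @ w) then fin k h g v u else C u)"

definition gi :: "nat \<Rightarrow> (nat \<Rightarrow> nat) \<Rightarrow> nat \<Rightarrow> nat \<Rightarrow> nat" where
  "gi k g i = (\<lambda>t. g (t*k + i))"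

lemma gi_mono: "strict_mono g \<Longrightarrow> k > 0 \<Longrightarrow> strict_mono (gi k g i)"
  unfolding gi_def strict_mono_def by simp

lemma spread:
  assumes "strict_mono g" "k > 0" "C v = g ` {..<k^h}" "\<forall>w. w \<noteq> [] \<longrightarrow> C (v @ w) = {}"
  shows "(fire_step k)\<^sup>*\<^sup>* C (tgt k h g v C)"
  using assms
proof (induction h arbitrary: g v C)
  case 0
  have "tgt k 0 g v C = C"
  proof
    fix u show "tgt k 0 g v C u = C u"
    proof (cases "\<exists>w. u = v @ w")
      case True
      then obtain w where u: "u = v @ w" by blast
      show ?thesis
      proof (cases "w = []")
        case True thus ?thesis using u 0 by (simp add: tgt_def fin_def lessThan_Suc)
      next
        case False thus ?thesis using u 0 by (simp add: tgt_def fin_def)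
      qed
    next
      case False thus ?thesis by (simp add: tgt_def)
    qed
  qed
  thus ?case by simp
next
  case (Suc h)
  note outerIH = Suc.IH
  note g = Suc.prems(1) and k = Suc.prems(2) and Cv = Suc.prems(3) and Cw = Suc.prems(4)
  define M where "M = k^h"
  define C1 where "C1 = L k g v C M M"
  have r1: "(fire_step k)\<^sup>*\<^sup>* C C1"
    unfolding C1_def by (rule loop[OF g k]) (use Cv Cw in \<open>auto simp: M_def\<close>)
  have C1v: "C1 v = {}" by (simp add: C1_def L_def)
  have C1c: "C1 (v @ [i]) = gi k g i ` {..<M}" if "i < k" for i
    using that by (simp add: C1_def L_def gi_def)
  have C1o: "C1 u = C u" if "u \<noteq> v" "\<not> (\<exists>i<k. u = v @ [i])" for u
    using that by (auto simp: C1_def L_def)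
  define D where "D m = (\<lambda>u. if (\<exists>i<m. \<exists>w. u = v @ i # w)
      then fin k h (gi k g (u ! length v)) (v @ [u ! length v]) u else C1 u)" for m
  have r2: "m \<le> k \<Longrightarrow> (fire_step k)\<^sup>*\<^sup>* C1 (D m)" for m
  proof (induction m)
    case 0
    have "D 0 = C1" by (simp add: D_def)
    thus ?case by simp
  next
    case (Suc m)
    hence IHm: "(fire_step k)\<^sup>*\<^sup>* C1 (D m)" and mk: "m < k" by auto
    have pre1: "D m (v @ [m]) = gi k g m ` {..<k^h}"
      using C1c[OF mk] by (simp add: D_def M_def)
    have pre2: "\<forall>w. w \<noteq> [] \<longrightarrow> D m ((v @ [m]) @ w) = {}"
    proof (intro allI impI)
      fix w :: "nat list" assume w: "w \<noteq> []"
      have "D m ((v @ [m]) @ w) = C1 (v @ m # w)" by (simp add: D_def)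
      also have "\<dots> = C (v @ m # w)" using w by (intro C1o) auto
      also have "\<dots> = {}" using Cw by simp
      finally show "D m ((v @ [m]) @ w) = {}" .
    qed
    have st: "(fire_step k)\<^sup>*\<^sup>* (D m) (tgt k h (gi k g m) (v @ [m]) (D m))"
      by (rule outerIH[OF gi_mono[OF g k] k pre1 pre2])
    have "tgt k h (gi k g m) (v @ [m]) (D m) = D (Suc m)"
    proof
      fix u
      show "tgt k h (gi k g m) (v @ [m]) (D m) u = D (Suc m) u"
      proof (cases "\<exists>w. u = v @ [m] @ w")
        case True
        then obtain w where u: "u = v @ [m] @ w" by blast
        thus ?thesis by (auto simp: tgt_def D_def)
      next
        case False
        hence "(\<exists>i<Suc m. \<exists>w. u = v @ i # w) = (\<exists>i<m. \<exists>w. u = v @ i # w)"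
          by (auto simp: less_Suc_eq)
        thus ?thesis using False by (simp add: tgt_def D_def)
      qed
    qed
    thus ?case using IHm st by simp
  qed
  have "D k = tgt k (Suc h) g v C"
  proof
    fix u
    show "D k u = tgt k (Suc h) g v C u"
    proof (cases "\<exists>w. u = v @ w")
      case False
      hence "u \<noteq> v" "\<not> (\<exists>i<k. u = v @ [i])" by auto
      thus ?thesis using False C1o by (auto simp: D_def tgt_def)
    next
      case True
      then obtain w where u: "u = v @ w" by blast
      show ?thesis
      proof (cases w)
        case Nil thus ?thesis using u C1v by (simp add: D_def tgt_def fin_def)
      next
        case (Cons i w')
        show ?thesis
        proof (cases "i < k")
          case True
          have "ri k w' * k + i = ri k (i # w')" by simp
          thus ?thesis using u Cons True
            by (auto simp: D_def tgt_def fin_def gi_def add.commute mult.commute)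
        next
          case False
          have "C1 u = C u" using u Cons False by (intro C1o) auto
          also have "C u = {}" using Cw u Cons by simp
          finally show ?thesis using u Cons False by (auto simp: D_def tgt_def fin_def)
        qed
      qed
    qed
  qed
  thus ?case using r1 r2[of k] by simp
qed

lemma card_le_perm:
  assumes P: "distinct P" "set P = {1..m}" and a: "a < length P"
  shows "card {i. i < length P \<and> P ! i \<le> P ! a} = P ! a"
proof -
  have inj: "inj_on (\<lambda>i. P ! i) {i. i < length P \<and> P ! i \<le> P ! a}"
    using P(1) by (auto simp: inj_on_def nth_eq_iff_index_eq)
  have "(\<lambda>i. P ! i) ` {i. i < length P \<and> P ! i \<le> P ! a} = {x \<in> set P. x \<le> P ! a}"
    by (auto simp: in_set_conv_nth)
  also have "\<dots> = {1..P ! a}" using P(2) a nth_mem[OF a] by auto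
  finally show ?thesis using card_image[OF inj] by simp
qed

theorem theorem4p2:
  fixes k n :: nat and P :: "nat list"
  assumes "k \<ge> 2" and "n \<ge> 1" and "is_perm_list (k ^ n) P"
  shows "\<exists>C. strategy_result k (k ^ (2 * n)) C \<and>
             contains_pattern (read_layer k (2 * n) C) P"
proof -
  have k: "k > 0" using assms(1) by simp
  define K where "K = k ^ n"
  define N where "N = k ^ (2 * n)"
  have NK: "N = K * K" by (simp add: N_def K_def mult_2 power_add)
  have Kpos: "K > 0" using k by (simp add: K_def)
  define C where "C = tgt k (2 * n) Suc [] (init_config N)"
  have Cu: "C u = (if length u = 2 * n \<and> (\<forall>x\<in>set u. x < k) then {Suc (ri k u)} else {})" for u
    by (simp add: C_def tgt_def fin_def)
  have reach: "(fire_step k)\<^sup>*\<^sup>* (init_config N) C"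
    unfolding C_def
  proof (rule spread)
    show "strict_mono Suc" by (simp add: strict_mono_def)
    show "0 < k" by (rule k)
    show "init_config N [] = Suc ` {..<k ^ (2 * n)}"
      by (simp add: init_config_def N_def image_Suc_lessThan)
    show "\<forall>w. w \<noteq> [] \<longrightarrow> init_config N ([] @ w) = {}"
      by (simp add: init_config_def)
  qed
  have stab: "stable k C"
    unfolding stable_def using assms(1) by (simp add: Cu)
  define w where "w = read_layer k (2 * n) C"
  have lw: "length w = N" by (simp add: w_def read_layer_def N_def)
  have wj: "w ! j = Suc (rv k (2 * n) j)" if "j < N" for j
  proof -
    have "C (layer_vertex k (2 * n) j) = {Suc (rv k (2 * n) j)}"
      using lv_dig[OF k] by (simp add: Cu rv_def)
    thus ?thesis using that by (simp add: w_def read_layer_def N_def)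
  qed
  have Pd: "distinct P" and Ps: "set P = {1..K}"
    using assms(3) by (auto simp: is_perm_list_def K_def)
  have lP: "length P = K" using distinct_card[OF Pd] Ps by simp
  have Pa: "1 \<le> P ! a \<and> P ! a \<le> K" if "a < K" for a
    using nth_mem[of a P] that lP Ps by auto
  define b where "b a = (SOME b. b < K \<and> rv k n b = P ! a - 1)" for a
  have b: "b a < K \<and> rv k n (b a) = P ! a - 1" if "a < K" for a
  proof -
    have "P ! a - 1 < K" using Pa[OF that] by linarith
    then obtain c where "c < K \<and> rv k n c = P ! a - 1"
      using rv_surj[OF k, of "P ! a - 1" n] by (auto simp: K_def)
    thus ?thesis unfolding b_def by (rule someI)
  qed
  define idx where "idx a = a * K + b a" for a
  have idxN: "idx a < N" if "a < K" for a
  proof -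
    have "idx a < (a + 1) * K" using b[OF that] by (simp add: idx_def)
    also have "\<dots> \<le> K * K" using that by (intro mult_le_mono1) simp
    finally show ?thesis by (simp add: NK)
  qed
  define val where "val a = Suc (rv k n a + K * (P ! a - 1))" for a
  have wval: "w ! idx a = val a" if "a < K" for a
  proof -
    have "rv k (n + n) (a * K + b a) = rv k n a + k ^ n * rv k n (b a)"
      using rv_add[OF k, of "b a" n n a] b[OF that] by (simp add: K_def)
    thus ?thesis using wj[OF idxN[OF that]] b[OF that]
      by (simp add: idx_def val_def mult_2 K_def)
  qed
  have vlt: "val a < val a'" if "a < K" "a' < K" "P ! a < P ! a'" for a a'
  proof -
    have "rv k n a < K" using rv_bound[OF k] by (simp add: K_def)
    moreover have "P ! a - 1 + 1 \<le> P ! a' - 1" using that Pa[OF that(1)] by simp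
    hence "K * (P ! a - 1) + K \<le> K * (P ! a' - 1)"
      by (metis mult.commute mult_le_mono1 distrib_left mult.right_neutral)
    ultimately show ?thesis by (simp add: val_def)
  qed
  have Pinj: "P ! a = P ! a' \<Longrightarrow> a = a'" if "a < K" "a' < K" for a a'
    using Pd that lP by (simp add: nth_eq_iff_index_eq)
  have vle: "val a \<le> val a' \<longleftrightarrow> P ! a \<le> P ! a'" if "a < K" "a' < K" for a a'
    using vlt[OF that] vlt[OF that(2,1)] Pinj[OF that]
    by (metis le_less not_less)
  have smono: "strict_mono_on {..<length P} idx"
  proof (rule strict_mono_onI)
    fix r s assume rs: "r \<in> {..<length P}" "s \<in> {..<length P}" "r < s"
    have "idx r < (r + 1) * K" using b[of r] rs lP by (simp add: idx_def)
    also have "\<dots> \<le> s * K" using rs by (intro mult_le_mono1) simp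
    also have "\<dots> \<le> idx s" by (simp add: idx_def)
    finally show "idx r < idx s" .
  qed
  have oi: "order_iso (map (\<lambda>i. w ! idx i) [0..<length P]) P"
    unfolding order_iso_def
  proof (intro conjI allI impI)
    have eq: "map (\<lambda>i. w ! idx i) [0..<length P] = map val [0..<K]"
      using wval lP by simp
    show "distinct (map (\<lambda>i. w ! idx i) [0..<length P])"
      unfolding eq distinct_map
    proof (intro conjI distinct_upt inj_onI)
      fix x y assume "x \<in> set [0..<K]" "y \<in> set [0..<K]" "val x = val y"
      hence xy: "x < K" "y < K" "val x = val y" by auto
      hence "P ! x = P ! y" using vle[OF xy(1,2)] vle[OF xy(2,1)] by simp
      thus "x = y" using Pinj xy by blast
    qed
    show "length (map (\<lambda>i. w ! idx i) [0..<length P]) = length P" by simp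
    fix j assume "j < length (map (\<lambda>i. w ! idx i) [0..<length P])"
    hence j: "j < K" using lP by simp
    have "{i. i < length (map (\<lambda>i. w ! idx i) [0..<length P]) \<and>
              map (\<lambda>i. w ! idx i) [0..<length P] ! i \<le> map (\<lambda>i. w ! idx i) [0..<length P] ! j}
          = {i. i < length P \<and> P ! i \<le> P ! j}"
      using j lP vle wval by auto
    thus "P ! j = card {i. i < length (map (\<lambda>i. w ! idx i) [0..<length P]) \<and>
              map (\<lambda>i. w ! idx i) [0..<length P] ! i \<le> map (\<lambda>i. w ! idx i) [0..<length P] ! j}"
      using card_le_perm[OF Pd Ps, of j] j lP by simp
  qed
  have "contains_pattern w P"
    unfolding contains_pattern_def
    using smono oi idxN lw lP NK by auto
  thus ?thesis using reach stab unfolding strategy_result_def w_def N_def by blast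
qed

end
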